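(* Let $k \in \mathbb{Z}_{\geq 0}$ and let $\gamma_X$ be a $(2k+2)$-DMS. Then $\operatorname{supp} H_k(\mathcal{R}^{\mathrm{lev}}(\gamma_X))$ is a convex subset of $\mathbf{Dyn}$, i.e. whenever $p \leq q \leq r$ in $\mathbf{Dyn}$ with $p, r$ in the support, also $q$ is in the support.
   Context: A dynamic metric space (DMS) $\gamma_X = (X, d_X(\cdot))$ is a finite set $X$ with a function $d_X : \mathbb{R} \times X \times X \to \mathbb{R}_{\geq 0}$ such that for each $t$, $d_X(t)$ is a pseudometric on $X$, and for each $x,x'$ the map $t \mapsto d_X(t)(x,x')$ is continuous. A $(2k+2)$-DMS is a DMS with $|X| = 2k+2$. For a compact interval $I \subset \mathbb{R}$, $d_X(I)(x,x') := \inf_{t \in I} d_X(t)(x,x')$ (a semimetric). For a semimetric $d$ on $X$ and $\delta \geq 0$, the Rips complex $\mathcal{R}_\delta(d)$ is the abstract simplicial complex on $X$ whose simplices are the finite nonempty $\sigma \subseteq X$ with $d(x,y) \leq \delta$ for all $x,y \in \sigma$. $\mathbf{Dyn}$ is the poset of pairs $(I,\delta)$ with $I$ a compact interval of $\mathbb{R}$ and $\delta \geq 0$, with $(I,\delta) \leq (I',\delta')$ iff $I \subseteq I'$ and $\delta \leq \delta'$. $\mathcal{R}^{\mathrm{lev}}(\gamma_X) : \mathbf{Dyn} \to \mathbf{Simp}$ sends $(I,\delta)$ to $\mathcal{R}_\delta(d_X(I))$ with inclusion maps, and $H_k(\mathcal{R}^{\mathrm{lev}}(\gamma_X))$ is its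 degree-$k$ simplicial homology over a fixed field $\mathbb{F}$. For this module every pointwise dimension is $0$ or $1$, and its support is the set of $p \in \mathbf{Dyn}$ where the vector space is nonzero. *)

theory Defs
  imports "HOL-Analysis.Analysis"
begin

definition pseudometric_on :: "'a set \<Rightarrow> ('a \<Rightarrow> 'a \<Rightarrow> real) \<Rightarrow> bool" where
  "pseudometric_on X d \<longleftrightarrow>
     (\<forall>x\<in>X. d x x = 0) \<and>
     (\<forall>x\<in>X. \<forall>y\<in>X. d x y \<ge> 0 \<and> d x y = d y x) \<and>
     (\<forall>x\<in>X. \<forall>y\<in>X. \<forall>z\<in>X. d x z \<le> d x y + d y z)"

definition DMS :: "'a set \<Rightarrow> (real \<Rightarrow> 'a \<Rightarrow> 'a \<Rightarrow> real) \<Rightarrow> bool" where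
  "DMS X dX \<longleftrightarrow> finite X \<and>
     (\<forall>t. pseudometric_on X (dX t)) \<and>
     (\<forall>x\<in>X. \<forall>y\<in>X. continuous_on UNIV (\<lambda>t. dX t x y))"

definition dI :: "(real \<Rightarrow> 'a \<Rightarrow> 'a \<Rightarrow> real) \<Rightarrow> real \<Rightarrow> real \<Rightarrow> 'a \<Rightarrow> 'a \<Rightarrow> real" where
  "dI dX a b x y = (INF t\<in>{a..b}. dX t x y)"

definition rips :: "'a set \<Rightarrow> ('a \<Rightarrow> 'a \<Rightarrow> real) \<Rightarrow> real \<Rightarrow> 'a set set" where
  "rips X d \<delta> = {\<sigma>. \<sigma> \<subseteq> X \<and> \<sigma> \<noteq> {} \<and> finite \<sigma> \<and> (\<forall>x\<in>\<sigma>. \<forall>y\<in>\<sigma>. d x y \<le> \<delta>)}"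

text \<open>simplices with n vertices, i.e. of dimension n-1\<close>
definition simplices :: "'a set set \<Rightarrow> nat \<Rightarrow> 'a set set" where
  "simplices K n = {\<sigma>\<in>K. card \<sigma> = n}"

definition is_chain :: "'a set set \<Rightarrow> nat \<Rightarrow> ('a set \<Rightarrow> 'f::field) \<Rightarrow> bool" where
  "is_chain K n c \<longleftrightarrow> (\<forall>\<sigma>. \<sigma> \<notin> simplices K n \<longrightarrow> c \<sigma> = 0)"

text \<open>incidence number [sigma : tau] for the orientation given by the vertex order\<close>
definition incidence :: "'a::linorder set \<Rightarrow> 'a set \<Rightarrow> 'f::field" where
  "incidence \<sigma> \<tau> = (if \<tau> \<subseteq> \<sigma> \<and> finite \<sigma> \<and> card \<sigma> = Suc (card \<tau>)
      then (-1) ^ card {y\<in>\<sigma>. y < the_elem (\<sigma> - \<tau>)} else 0)"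

definition bdry :: "'a::linorder set set \<Rightarrow> nat \<Rightarrow> ('a set \<Rightarrow> 'f::field) \<Rightarrow> 'a set \<Rightarrow> 'f" where
  "bdry K n c \<tau> = (\<Sum>\<sigma>\<in>simplices K n. c \<sigma> * incidence \<sigma> \<tau>)"

definition homology_nonzero :: "'f::field itself \<Rightarrow> 'a::linorder set set \<Rightarrow> nat \<Rightarrow> bool" where
  "homology_nonzero _ K k \<longleftrightarrow>
     (\<exists>c :: 'a set \<Rightarrow> 'f. is_chain K (k+1) c
        \<and> (\<forall>\<tau>\<in>simplices K k. bdry K (k+1) c \<tau> = 0)
        \<and> \<not> (\<exists>b :: 'a set \<Rightarrow> 'f. is_chain K (k+2) b
              \<and> (\<forall>\<tau>\<in>simplices K (k+1). c \<tau> = bdry K (k+2) b \<tau>)))"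

text \<open>An element ((a,b),delta) stands for ([a,b], delta)\<close>
definition Dyn :: "((real \<times> real) \<times> real) set" where
  "Dyn = {((a,b),\<delta>). a \<le> b \<and> 0 \<le> \<delta>}"

definition dyn_le :: "((real \<times> real) \<times> real) \<Rightarrow> ((real \<times> real) \<times> real) \<Rightarrow> bool" where
  "dyn_le p q \<longleftrightarrow> (case p of ((a,b),\<delta>) \<Rightarrow> case q of ((a',b'),\<delta>') \<Rightarrow>
      {a..b} \<subseteq> {a'..b'} \<and> \<delta> \<le> \<delta>')"

definition rips_lev :: "'a set \<Rightarrow> (real \<Rightarrow> 'a \<Rightarrow> 'a \<Rightarrow> real) \<Rightarrow> ((real \<times> real) \<times> real) \<Rightarrow> 'a set set" where
  "rips_lev X dX p = (case p of ((a,b),\<delta>) \<Rightarrow> rips X (dI dX a b) \<delta>)"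

definition supp_Hk_lev :: "'f::field itself \<Rightarrow> 'a::linorder set \<Rightarrow> (real \<Rightarrow> 'a \<Rightarrow> 'a \<Rightarrow> real)
    \<Rightarrow> nat \<Rightarrow> ((real \<times> real) \<times> real) set" where
  "supp_Hk_lev F X dX k = {p\<in>Dyn. homology_nonzero F (rips_lev X dX p) k}"

end

theory Submission
  imports Defs
begin


definition sg :: "'a::linorder \<Rightarrow> 'a set \<Rightarrow> 'f::field" where
  "sg x \<tau> = (-1) ^ card {y\<in>\<tau>. y < x}"

definition Dop :: "'a::linorder set \<Rightarrow> ('a set \<Rightarrow> 'f::field) \<Rightarrow> 'a set \<Rightarrow> 'f" where
  "Dop X c \<tau> = (\<Sum>x\<in>X - \<tau>. c (insert x \<tau>) * sg x \<tau>)"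

definition vcone :: "'a::linorder \<Rightarrow> ('a set \<Rightarrow> 'f::field) \<Rightarrow> 'a set \<Rightarrow> 'f" where
  "vcone v c \<rho> = (if v \<in> \<rho> then sg v (\<rho> - {v}) * c (\<rho> - {v}) else 0)"

definition clq :: "('a \<Rightarrow> 'a \<Rightarrow> bool) \<Rightarrow> 'a set \<Rightarrow> 'a set \<Rightarrow> bool" where
  "clq G S \<sigma> \<longleftrightarrow> \<sigma> \<subseteq> S \<and> (\<forall>x\<in>\<sigma>. \<forall>y\<in>\<sigma>. x \<noteq> y \<longrightarrow> G x y)"

definition chn :: "('a \<Rightarrow> 'a \<Rightarrow> bool) \<Rightarrow> 'a set \<Rightarrow> nat \<Rightarrow> ('a set \<Rightarrow> 'f::field) \<Rightarrow> bool" where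
  "chn G S n c \<longleftrightarrow> (\<forall>\<sigma>. c \<sigma> \<noteq> 0 \<longrightarrow> clq G S \<sigma> \<and> card \<sigma> = n)"

definition cyc :: "'a::linorder set \<Rightarrow> nat \<Rightarrow> ('a set \<Rightarrow> 'f::field) \<Rightarrow> bool" where
  "cyc X n z \<longleftrightarrow> (\<forall>\<tau>. \<tau> \<subseteq> X \<longrightarrow> card \<tau> = n \<longrightarrow> Dop X z \<tau> = 0)"

definition bnd :: "('a \<Rightarrow> 'a \<Rightarrow> bool) \<Rightarrow> 'a::linorder set \<Rightarrow> 'a set \<Rightarrow> nat \<Rightarrow> ('a set \<Rightarrow> 'f::field) \<Rightarrow> bool" where
  "bnd G X S n z \<longleftrightarrow> (\<exists>b. chn G S (n+1) b \<and> (\<forall>\<sigma>. \<sigma> \<subseteq> X \<longrightarrow> card \<sigma> = n \<longrightarrow> z \<sigma> = Dop X b \<sigma>))"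

lemma sum_single:
  assumes "finite A" "a \<in> A" "\<And>x. x \<in> A \<Longrightarrow> x \<noteq> a \<Longrightarrow> f x = 0"
  shows "sum f A = f a"
proof -
  have "sum f A = f a + sum f (A - {a})" using sum.remove[OF assms(1,2)] .
  moreover have "sum f (A - {a}) = 0" using assms by (intro sum.neutral) auto
  ultimately show ?thesis by simp
qed

lemma sg_sq: "sg x \<tau> * sg x \<tau> = (1::'f::field)"
  unfolding sg_def power_add[symmetric] by simp

lemma sg_nz: "sg x \<tau> \<noteq> (0::'f::field)"
  using sg_sq[of x \<tau>] by (metis mult_zero_left zero_neq_one)

lemma sg_insert:
  assumes "finite \<tau>" "x \<notin> \<tau>"
  shows "sg v (insert x \<tau>) = (if x < v then - sg v \<tau> else (sg v \<tau> :: 'f::field))"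
proof (cases "x < v")
  case True
  have "{y\<in>insert x \<tau>. y < v} = insert x {y\<in>\<tau>. y < v}" using True by auto
  moreover have "card (insert x {y\<in>\<tau>. y < v}) = Suc (card {y\<in>\<tau>. y < v})"
    using assms by simp
  ultimately show ?thesis using True by (simp add: sg_def)
next
  case False
  have "{y\<in>insert x \<tau>. y < v} = {y\<in>\<tau>. y < v}" using False by auto
  then show ?thesis using False by (simp add: sg_def)
qed

lemma sg_empty: "sg x {} = 1" by (simp add: sg_def)

lemma D_add: "Dop X (\<lambda>\<sigma>. a \<sigma> + b \<sigma>) \<tau> = Dop X a \<tau> + Dop X b \<tau>"
  unfolding Dop_def by (simp add: distrib_right sum.distrib)

lemma D_diff: "Dop X (\<lambda>\<sigma>. a \<sigma> - b \<sigma>) \<tau> = Dop X a \<tau> - Dop X b \<tau>"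
  unfolding Dop_def by (simp add: left_diff_distrib sum_subtractf)

lemma D_zero: "Dop X (\<lambda>\<sigma>. 0) \<tau> = 0"
  unfolding Dop_def by simp

lemma D_vanish:
  assumes "\<And>\<sigma>. v \<in> \<sigma> \<Longrightarrow> c \<sigma> = 0" "v \<in> \<tau>"
  shows "Dop X c \<tau> = 0"
  unfolding Dop_def using assms by (intro sum.neutral) auto

lemma D_vcone:
  assumes fin: "finite X" "finite \<tau>" and vX: "v \<in> X" and van: "\<And>\<sigma>. v \<in> \<sigma> \<Longrightarrow> c \<sigma> = 0"
  shows "Dop X (vcone v c) \<tau> = (if v \<in> \<tau> then - (sg v (\<tau> - {v}) * Dop X c (\<tau> - {v})) else c \<tau>)"
proof (cases "v \<in> \<tau>")
  case False
  have "Dop X (vcone v c) \<tau> = vcone v c (insert v \<tau>) * sg v \<tau>"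
    unfolding Dop_def
    by (rule sum_single) (use False vX fin in \<open>auto simp: vcone_def\<close>)
  also have "\<dots> = c \<tau>" using False
    by (simp add: vcone_def mult.commute mult.left_commute sg_sq)
  finally show ?thesis using False by simp
next
  case True
  define t0 where "t0 = \<tau> - {v}"
  have tau: "\<tau> = insert v t0" "v \<notin> t0" "finite t0" using True fin by (auto simp: t0_def)
  have "Dop X (vcone v c) \<tau> = (\<Sum>x\<in>X - \<tau>. - (sg v t0 * (c (insert x t0) * sg x t0)))"
    unfolding Dop_def
  proof (rule sum.cong[OF refl])
    fix x assume x: "x \<in> X - \<tau>"
    then have xv: "x \<noteq> v" "x \<notin> t0" using tau by auto
    have e: "insert x \<tau> - {v} = insert x t0" using tau xv by auto
    have e1: "vcone v c (insert x \<tau>) = sg v (insert x t0) * c (insert x t0)"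
      unfolding vcone_def e using True by simp
    have e2: "sg x \<tau> = (if v < x then - sg x t0 else (sg x t0::'f::field))"
      using sg_insert[OF tau(3) tau(2), of x] tau(1) by simp
    have e3: "sg v (insert x t0) = (if x < v then - sg v t0 else (sg v t0::'f::field))"
      using sg_insert[OF tau(3) xv(2), of v] by simp
    show "vcone v c (insert x \<tau>) * sg x \<tau> = - (sg v t0 * (c (insert x t0) * sg x t0))"
    proof (cases "x < v")
      case True
      then have "\<not> v < x" by simp
      then have "sg x \<tau> = (sg x t0::'f::field)" "sg v (insert x t0) = - sg v t0" using e2 e3 True by simp_all
      note h = this
      show ?thesis unfolding e1 h by (simp add: algebra_simps)
    next
      case False
      then have "v < x" using xv(1) by simp
      then have "sg x \<tau> = - (sg x t0::'f::field)" "sg v (insert x t0) = sg v t0" using e2 e3 False by simp_all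
      note h = this
      show ?thesis unfolding e1 h by (simp add: algebra_simps)
    qed
  qed
  also have "\<dots> = - (sg v t0 * (\<Sum>x\<in>X - \<tau>. c (insert x t0) * sg x t0))"
    by (simp add: sum_negf sum_distrib_left)
  moreover have "(\<Sum>x\<in>X - \<tau>. c (insert x t0) * sg x t0) = Dop X c t0"
  proof -
    have "X - t0 = insert v (X - \<tau>)" using tau vX by auto
    moreover have "v \<notin> X - \<tau>" using True by simp
    ultimately have "Dop X c t0 = c (insert v t0) * sg v t0 + (\<Sum>x\<in>X - \<tau>. c (insert x t0) * sg x t0)"
      unfolding Dop_def using fin by simp
    then show ?thesis using van by simp
  qed
  ultimately have "Dop X (vcone v c) \<tau> = - (sg v t0 * Dop X c t0)" by simp
  then show ?thesis using True unfolding t0_def by simp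
qed



lemma chn_mono: "chn G T n c \<Longrightarrow> T \<subseteq> S \<Longrightarrow> chn G S n c"
  unfolding chn_def clq_def by (meson subset_trans)

lemma chn_vcone:
  assumes "chn G T n c" "finite T" "v \<notin> T" "\<forall>u\<in>T. G u v \<and> G v u" "insert v T \<subseteq> S"
  shows "chn G S (Suc n) (vcone v c)"
  unfolding chn_def
proof (intro allI impI)
  fix \<rho> assume "vcone v c \<rho> \<noteq> 0"
  then have v: "v \<in> \<rho>" and nz: "c (\<rho> - {v}) \<noteq> 0" by (auto simp: vcone_def split: if_splits)
  then have cl: "clq G T (\<rho> - {v})" and cd: "card (\<rho> - {v}) = n" using assms(1) by (auto simp: chn_def)
  have fin: "finite (\<rho> - {v})" using cl assms(2) unfolding clq_def by (meson finite_subset)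
  show "clq G S \<rho> \<and> card \<rho> = Suc n"
  proof
    show "clq G S \<rho>" unfolding clq_def
    proof (intro conjI ballI impI)
      show "\<rho> \<subseteq> S" using cl assms(5) v unfolding clq_def by auto
      fix x y assume xy: "x \<in> \<rho>" "y \<in> \<rho>" "x \<noteq> y"
      show "G x y" using cl assms(4) xy unfolding clq_def by (cases "x = v"; cases "y = v") auto
    qed
    show "card \<rho> = Suc n" using card.remove[of \<rho> v] fin cd v by simp
  qed
qed

lemma decomp:
  fixes z :: "'a::linorder set \<Rightarrow> 'f::field"
  shows "z \<sigma> = (if v \<in> \<sigma> then 0 else z \<sigma>) + vcone v (\<lambda>\<tau>. if v \<in> \<tau> then 0 else sg v \<tau> * z (insert v \<tau>)) \<sigma>"
proof (cases "v \<in> \<sigma>")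
  case True
  then have e: "insert v (\<sigma> - {v}) = \<sigma>" by auto
  have "sg v (\<sigma> - {v}) * (sg v (\<sigma> - {v}) * z \<sigma>) = (sg v (\<sigma> - {v}) * sg v (\<sigma> - {v})) * z \<sigma>"
    by (simp add: mult.assoc)
  then show ?thesis using True e by (simp add: vcone_def sg_sq)
next
  case False then show ?thesis by (simp add: vcone_def)
qed

lemma key_w:
  fixes z :: "'a::linorder set \<Rightarrow> 'f::field"
  assumes "finite X" "v \<in> X" "\<tau> \<subseteq> X" "v \<notin> \<tau>"
  shows "Dop X z \<tau> = Dop X (\<lambda>\<sigma>. if v \<in> \<sigma> then 0 else z \<sigma>) \<tau> + (if v \<in> \<tau> then 0 else sg v \<tau> * z (insert v \<tau>))"
proof -
  let ?z0 = "\<lambda>\<sigma>. if v \<in> \<sigma> then 0 else z \<sigma>"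
  let ?w = "\<lambda>\<tau>. if v \<in> \<tau> then 0 else sg v \<tau> * z (insert v \<tau>)"
  have eq: "z = (\<lambda>\<sigma>. ?z0 \<sigma> + vcone v ?w \<sigma>)" by (rule ext) (rule decomp[where z=z and v=v])
  have e1: "Dop X z \<tau> = Dop X (\<lambda>\<sigma>. ?z0 \<sigma> + vcone v ?w \<sigma>) \<tau>"
    using arg_cong[OF eq, of "\<lambda>c. Dop X c \<tau>"] by (simp only:)
  have e2: "Dop X (\<lambda>\<sigma>. ?z0 \<sigma> + vcone v ?w \<sigma>) \<tau> = Dop X ?z0 \<tau> + Dop X (vcone v ?w) \<tau>" by (rule D_add)
  have e3: "Dop X (vcone v ?w) \<tau> = ?w \<tau>"
    using D_vcone[of X \<tau> v ?w] assms finite_subset[OF assms(3,1)] by simp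
  show ?thesis unfolding e1 e2 e3 ..
qed

lemma key_v:
  fixes z :: "'a::linorder set \<Rightarrow> 'f::field"
  assumes "finite X" "v \<in> X" "\<tau> \<subseteq> X" "v \<notin> \<tau>"
  shows "Dop X z (insert v \<tau>) = - (sg v \<tau> * Dop X (\<lambda>\<tau>. if v \<in> \<tau> then 0 else sg v \<tau> * z (insert v \<tau>)) \<tau>)"
proof -
  let ?z0 = "\<lambda>\<sigma>. if v \<in> \<sigma> then 0 else z \<sigma>"
  let ?w = "\<lambda>\<tau>. if v \<in> \<tau> then 0 else sg v \<tau> * z (insert v \<tau>)"
  have eq: "z = (\<lambda>\<sigma>. ?z0 \<sigma> + vcone v ?w \<sigma>)" by (rule ext) (rule decomp[where z=z and v=v])
  have e1: "Dop X z (insert v \<tau>) = Dop X (\<lambda>\<sigma>. ?z0 \<sigma> + vcone v ?w \<sigma>) (insert v \<tau>)"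
    using arg_cong[OF eq, of "\<lambda>c. Dop X c (insert v \<tau>)"] by (simp only:)
  have e2: "Dop X (\<lambda>\<sigma>. ?z0 \<sigma> + vcone v ?w \<sigma>) (insert v \<tau>) = Dop X ?z0 (insert v \<tau>) + Dop X (vcone v ?w) (insert v \<tau>)" by (rule D_add)
  have e3: "Dop X ?z0 (insert v \<tau>) = 0" by (rule D_vanish[of v]) auto
  have e4: "Dop X (vcone v ?w) (insert v \<tau>) = - (sg v \<tau> * Dop X ?w \<tau>)"
    using D_vcone[of X "insert v \<tau>" v ?w] assms finite_subset[OF assms(3,1)] by simp
  show ?thesis unfolding e1 e2 e3 e4 by simp
qed



lemma cone_case:
  fixes z :: "'a::linorder set \<Rightarrow> 'f::field"
  assumes X: "finite X" "S \<subseteq> X" "v \<in> S" and adj: "\<forall>u\<in>S. u \<noteq> v \<longrightarrow> G u v \<and> G v u"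
    and ch: "chn G S (Suc n) z" and cy: "cyc X n z"
  shows "bnd G X S (Suc n) z"
proof -
  let ?z0 = "\<lambda>\<sigma>. if v \<in> \<sigma> then 0 else z \<sigma>"
  have vX: "v \<in> X" using X by auto
  have finS: "finite S" using X by (meson finite_subset)
  have ch0: "chn G (S - {v}) (Suc n) ?z0" using ch unfolding chn_def clq_def by auto
  have chb: "chn G S (Suc (Suc n)) (vcone v ?z0)"
    by (rule chn_vcone[OF ch0]) (use X finS adj in auto)
  show ?thesis unfolding bnd_def
  proof (intro exI conjI allI impI)
    show "chn G S (Suc n + 1) (vcone v ?z0)" using chb by simp
    fix \<sigma> assume \<sigma>: "\<sigma> \<subseteq> X" "card \<sigma> = Suc n"
    have fin\<sigma>: "finite \<sigma>" using finite_subset[OF \<sigma>(1) X(1)] .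
    have D: "Dop X (vcone v ?z0) \<sigma> = (if v \<in> \<sigma> then - (sg v (\<sigma> - {v}) * Dop X ?z0 (\<sigma> - {v})) else ?z0 \<sigma>)"
      by (rule D_vcone) (use X vX fin\<sigma> in auto)
    show "z \<sigma> = Dop X (vcone v ?z0) \<sigma>"
    proof (cases "v \<in> \<sigma>")
      case False then show ?thesis using D by simp
    next
      case True
      define t where "t = \<sigma> - {v}"
      have t: "t \<subseteq> X" "v \<notin> t" "card t = n" "\<sigma> = insert v t"
        using \<sigma> True fin\<sigma> by (auto simp: t_def)
      have "Dop X z t = 0" using cy t by (simp add: cyc_def)
      moreover have "Dop X z t = Dop X ?z0 t + sg v t * z (insert v t)"
        using key_w[OF X(1) vX t(1) t(2), of z] t(2) by simp
      ultimately have "Dop X ?z0 t + sg v t * z \<sigma> = 0" using t(4) by simp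
      then have h: "Dop X ?z0 t = - (sg v t * z \<sigma>)" by (simp add: eq_neg_iff_add_eq_0)
      have "Dop X (vcone v ?z0) \<sigma> = - (sg v t * Dop X ?z0 t)" using D True by (simp add: t_def)
      also have "\<dots> = (sg v t * sg v t) * z \<sigma>" unfolding h by (simp add: mult.assoc)
      also have "\<dots> = z \<sigma>" by (simp add: sg_sq)
      finally show ?thesis by simp
    qed
  qed
qed

lemma noncone_step:
  fixes z :: "'a::linorder set \<Rightarrow> 'f::field"
  assumes X: "finite X" "S \<subseteq> X" "v \<in> S"
    and ch: "chn G S (Suc (Suc m)) z" and cy: "cyc X (Suc m) z"
    and HN: "\<And>w::'a set \<Rightarrow> 'f. chn G {u\<in>S. u \<noteq> v \<and> G u v \<and> G v u} (Suc m) w \<Longrightarrow> cyc X m w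
               \<Longrightarrow> bnd G X {u\<in>S. u \<noteq> v \<and> G u v \<and> G v u} (Suc m) w"
    and HS: "\<And>z'::'a set \<Rightarrow> 'f. chn G (S - {v}) (Suc (Suc m)) z' \<Longrightarrow> cyc X (Suc m) z'
               \<Longrightarrow> bnd G X (S - {v}) (Suc (Suc m)) z'"
  shows "bnd G X S (Suc (Suc m)) z"
proof -
  define N where "N = {u\<in>S. u \<noteq> v \<and> G u v \<and> G v u}"
  define w where "w = (\<lambda>\<tau>. if v \<in> \<tau> then 0 else sg v \<tau> * z (insert v \<tau>))"
  let ?z0 = "\<lambda>\<sigma>. if v \<in> \<sigma> then 0 else z \<sigma>"
  have vX: "v \<in> X" using X by auto
  have finS: "finite S" using X by (meson finite_subset)
  have chw: "chn G N (Suc m) w"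
    unfolding chn_def
  proof (intro allI impI)
    fix \<tau> assume "w \<tau> \<noteq> 0"
    then have v: "v \<notin> \<tau>" and nz: "z (insert v \<tau>) \<noteq> 0" by (auto simp: w_def split: if_splits)
    from ch nz have cl: "clq G S (insert v \<tau>)" and cd: "card (insert v \<tau>) = Suc (Suc m)"
      unfolding chn_def by auto
    have fin\<tau>: "finite \<tau>" using cl finS unfolding clq_def by (meson finite_insert finite_subset)
    show "clq G N \<tau> \<and> card \<tau> = Suc m"
    proof
      show "card \<tau> = Suc m" using cd fin\<tau> v by simp
      show "clq G N \<tau>" using cl v unfolding clq_def N_def by auto
    qed
  qed
  have cyw: "cyc X m w" unfolding cyc_def
  proof (intro allI impI)
    fix \<tau> assume \<tau>: "\<tau> \<subseteq> X" "card \<tau> = m"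
    show "Dop X w \<tau> = 0"
    proof (cases "v \<in> \<tau>")
      case True then show ?thesis by (intro D_vanish[of v]) (auto simp: w_def)
    next
      case False
      have fin\<tau>: "finite \<tau>" using \<tau>(1) X(1) by (rule finite_subset)
      have "Dop X z (insert v \<tau>) = 0" using cy \<tau> False fin\<tau> vX unfolding cyc_def by auto
      moreover have "Dop X z (insert v \<tau>) = - (sg v \<tau> * Dop X w \<tau>)"
        unfolding w_def by (rule key_v[OF X(1) vX \<tau>(1) False])
      ultimately show ?thesis by (simp add: sg_nz)
    qed
  qed
  have "bnd G X N (Suc m) w" unfolding N_def by (rule HN) (use chw cyw in \<open>simp_all add: N_def\<close>)
  then obtain u where chu: "chn G N (Suc (Suc m)) u"
      and uw: "\<And>\<sigma>. \<sigma> \<subseteq> X \<Longrightarrow> card \<sigma> = Suc m \<Longrightarrow> w \<sigma> = Dop X u \<sigma>"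
    unfolding bnd_def by auto
  have uv: "\<And>\<sigma>. v \<in> \<sigma> \<Longrightarrow> u \<sigma> = 0" using chu unfolding chn_def clq_def N_def by auto
  define z1 where "z1 = (\<lambda>\<sigma>. if v \<in> \<sigma> then 0 else z \<sigma> + u \<sigma>)"
  have chz1: "chn G (S - {v}) (Suc (Suc m)) z1"
    unfolding chn_def
  proof (intro allI impI)
    fix \<sigma> assume "z1 \<sigma> \<noteq> 0"
    then have v: "v \<notin> \<sigma>" and "z \<sigma> \<noteq> 0 \<or> u \<sigma> \<noteq> 0" by (auto simp: z1_def split: if_splits)
    then show "clq G (S - {v}) \<sigma> \<and> card \<sigma> = Suc (Suc m)"
      using ch chu unfolding chn_def clq_def N_def by auto
  qed
  have cyz1: "cyc X (Suc m) z1" unfolding cyc_def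
  proof (intro allI impI)
    fix \<tau> assume \<tau>: "\<tau> \<subseteq> X" "card \<tau> = Suc m"
    have e: "z1 = (\<lambda>\<sigma>. ?z0 \<sigma> + u \<sigma>)" using uv by (auto simp: z1_def)
    have s: "Dop X z1 \<tau> = Dop X ?z0 \<tau> + Dop X u \<tau>" unfolding e by (rule D_add)
    show "Dop X z1 \<tau> = 0"
    proof (cases "v \<in> \<tau>")
      case True
      have "Dop X ?z0 \<tau> = 0" by (rule D_vanish[of v]) (use True in auto)
      moreover have "Dop X u \<tau> = 0" by (rule D_vanish[of v]) (use True uv in auto)
      ultimately show ?thesis using s by simp
    next
      case False
      have "Dop X z \<tau> = Dop X ?z0 \<tau> + w \<tau>"
        using key_w[OF X(1) vX \<tau>(1) False, of z] False unfolding w_def by simp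
      moreover have "Dop X z \<tau> = 0" using cy \<tau> unfolding cyc_def by auto
      moreover have "Dop X u \<tau> = w \<tau>" using uw[OF \<tau>] by simp
      ultimately show ?thesis using s by simp
    qed
  qed
  obtain b1 where chb1: "chn G (S - {v}) (Suc (Suc (Suc m))) b1"
      and zb1: "\<And>\<sigma>. \<sigma> \<subseteq> X \<Longrightarrow> card \<sigma> = Suc (Suc m) \<Longrightarrow> z1 \<sigma> = Dop X b1 \<sigma>"
    using HS[OF chz1 cyz1] unfolding bnd_def by auto
  have finN: "finite N" using finS unfolding N_def by simp
  have chc: "chn G S (Suc (Suc (Suc m))) (vcone v u)"
    by (rule chn_vcone[OF chu finN]) (use X in \<open>auto simp: N_def\<close>)
  define b where "b = (\<lambda>\<rho>. b1 \<rho> - vcone v u \<rho>)"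
  show ?thesis unfolding bnd_def
  proof (intro exI conjI allI impI)
    show "chn G S (Suc (Suc m) + 1) b" unfolding chn_def
    proof (intro allI impI)
      fix \<rho> assume "b \<rho> \<noteq> 0"
      then have "b1 \<rho> \<noteq> 0 \<or> vcone v u \<rho> \<noteq> 0" by (auto simp: b_def)
      then show "clq G S \<rho> \<and> card \<rho> = Suc (Suc m) + 1"
        using chb1 chc unfolding chn_def clq_def by auto
    qed
    fix \<sigma> assume \<sigma>: "\<sigma> \<subseteq> X" "card \<sigma> = Suc (Suc m)"
    have fin\<sigma>: "finite \<sigma>" using finite_subset[OF \<sigma>(1) X(1)] .
    have Db: "Dop X b \<sigma> = Dop X b1 \<sigma> - Dop X (vcone v u) \<sigma>" unfolding b_def by (rule D_diff)
    have Dc: "Dop X (vcone v u) \<sigma> = (if v \<in> \<sigma> then - (sg v (\<sigma> - {v}) * Dop X u (\<sigma> - {v})) else u \<sigma>)"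
      by (rule D_vcone) (use X(1) fin\<sigma> vX uv in auto)
    show "z \<sigma> = Dop X b \<sigma>"
    proof (cases "v \<in> \<sigma>")
      case False
      have h1: "Dop X b \<sigma> = Dop X b1 \<sigma> - u \<sigma>" using Db Dc False by simp
      have h2: "Dop X b1 \<sigma> = z \<sigma> + u \<sigma>" using zb1[OF \<sigma>] False by (simp add: z1_def)
      show ?thesis unfolding h1 h2 by simp
    next
      case True
      define t where "t = \<sigma> - {v}"
      have t: "t \<subseteq> X" "v \<notin> t" "card t = Suc m" "\<sigma> = insert v t"
        using \<sigma> True fin\<sigma> by (auto simp: t_def)
      have ut: "Dop X u t = sg v t * z \<sigma>" using uw[OF t(1) t(3)] t(2) t(4) by (simp add: w_def)
      have "Dop X b \<sigma> = z1 \<sigma> + sg v t * Dop X u t" using Db Dc zb1[OF \<sigma>] True by (simp add: t_def)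
      also have "\<dots> = (sg v t * sg v t) * z \<sigma>" unfolding ut using True by (simp add: z1_def mult.assoc)
      also have "\<dots> = z \<sigma>" by (simp add: sg_sq)
      finally show ?thesis by simp
    qed
  qed
qed



lemma core:
  fixes z :: "'a::linorder set \<Rightarrow> 'f::field"
  assumes "finite X" "S \<subseteq> X" "card S \<le> 2*k+1" "chn G S (Suc k) z" "cyc X k z"
  shows "bnd G X S (Suc k) z"
  using assms
proof (induction k arbitrary: S z)
  case 0
  show ?case unfolding bnd_def
  proof (intro exI conjI allI impI)
    show "chn G S (Suc 0 + 1) (\<lambda>_. 0::'f)" by (simp add: chn_def)
    fix \<sigma> assume \<sigma>: "\<sigma> \<subseteq> X" "card \<sigma> = Suc 0"
    show "z \<sigma> = Dop X (\<lambda>_. 0) \<sigma>"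
    proof (rule ccontr)
      assume ne: "z \<sigma> \<noteq> Dop X (\<lambda>_. 0) \<sigma>"
      then have nz: "z \<sigma> \<noteq> 0" by (simp add: D_zero)
      obtain x where x: "\<sigma> = {x}" using \<sigma>(2) by (metis One_nat_def card_1_singletonE)
      have xS: "x \<in> S" using "0.prems"(4) nz x unfolding chn_def clq_def by auto
      have finS: "finite S" using "0.prems"(1,2) by (meson finite_subset)
      have S1: "S = {x}"
      proof -
        have "card S \<le> 1" using "0.prems"(3) by simp
        then show ?thesis using xS finS by (metis card_1_singletonE card_0_eq empty_iff le_Suc_eq le_zero_eq One_nat_def singletonD)
      qed
      have xX: "x \<in> X" using \<sigma> x by auto
      have "Dop X z {} = 0" using "0.prems"(5) unfolding cyc_def by auto
      moreover have "Dop X z {} = z {x}"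
        unfolding Dop_def
      proof -
        have "(\<Sum>y\<in>X - {}. z (insert y {}) * sg y {}) = z (insert x {}) * sg x {}"
        proof (rule sum_single)
          show "finite (X - {})" using "0.prems"(1) by simp
          show "x \<in> X - {}" using xX by simp
          fix y assume "y \<in> X - {}" "y \<noteq> x"
          then have "z {y} = 0" using "0.prems"(4) S1 unfolding chn_def clq_def by auto
          then show "z (insert y {}) * sg y {} = 0" by simp
        qed
        then show "(\<Sum>y\<in>X - {}. z (insert y {}) * sg y {}) = z {x}" by (simp add: sg_empty)
      qed
      ultimately show False using nz x by simp
    qed
  qed
next
  case (Suc k)
  have main: "\<And>S (z::'a set \<Rightarrow> 'f). card S = n \<Longrightarrow> S \<subseteq> X \<Longrightarrow> card S \<le> 2 * Suc k + 1
      \<Longrightarrow> chn G S (Suc (Suc k)) z \<Longrightarrow> cyc X (Suc k) z \<Longrightarrow> bnd G X S (Suc (Suc k)) z" for n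
  proof (induction n rule: less_induct)
    case (less n S z)
    have finS: "finite S" using Suc.prems(1) less.prems(2) by (meson finite_subset)
    show ?case
    proof (cases "S = {}")
      case True
      have z0: "z \<sigma> = 0" for \<sigma>
      proof (rule ccontr)
        assume "z \<sigma> \<noteq> 0"
        then have "clq G S \<sigma> \<and> card \<sigma> = Suc (Suc k)" using less.prems(4) unfolding chn_def by blast
        then show False using True unfolding clq_def by auto
      qed
      show ?thesis unfolding bnd_def
      proof (intro exI conjI allI impI)
        show "chn G S (Suc (Suc k) + 1) (\<lambda>_. 0::'f)" by (simp add: chn_def)
        fix \<sigma> show "z \<sigma> = Dop X (\<lambda>_. 0) \<sigma>" by (simp add: z0 D_zero)
      qed
    next
      case False
      then obtain v where vS: "v \<in> S" by blast
      show ?thesis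
      proof (cases "\<forall>u\<in>S. u \<noteq> v \<longrightarrow> G u v \<and> G v u")
        case True
        show ?thesis by (rule cone_case[OF Suc.prems(1) less.prems(2) vS True less.prems(4,5)])
      next
        case False
        then obtain a where a: "a \<in> S" "a \<noteq> v" "\<not> (G a v \<and> G v a)" by blast
        show ?thesis
        proof (rule noncone_step[OF Suc.prems(1) less.prems(2) vS less.prems(4,5)])
          fix w :: "'a set \<Rightarrow> 'f"
          assume w: "chn G {u \<in> S. u \<noteq> v \<and> G u v \<and> G v u} (Suc k) w" "cyc X k w"
          let ?N = "{u \<in> S. u \<noteq> v \<and> G u v \<and> G v u}"
          have sub: "?N \<subseteq> S - {v, a}" using a by auto
          have "card ?N \<le> card (S - {v, a})" using sub finS by (intro card_mono) auto
          also have "card (S - {v, a}) = card S - 2" using vS a finS by (simp add: card_Diff_subset)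
          finally have "card ?N \<le> 2 * k + 1" using less.prems(3) by simp
          moreover have "?N \<subseteq> X" using less.prems(2) by auto
          ultimately show "bnd G X ?N (Suc k) w" using Suc.IH[OF Suc.prems(1)] w by blast
        next
          fix z' :: "'a set \<Rightarrow> 'f"
          assume z': "chn G (S - {v}) (Suc (Suc k)) z'" "cyc X (Suc k) z'"
          have "card (S - {v}) < n" using less.prems(1) vS finS using card_Diff1_less[OF finS vS] by simp
          moreover have "card (S - {v}) \<le> 2 * Suc k + 1" using less.prems(3) vS finS by simp
          moreover have "S - {v} \<subseteq> X" using less.prems(2) by auto
          ultimately show "bnd G X (S - {v}) (Suc (Suc k)) z'" using less.IH z' by blast
        qed
      qed
    qed
  qed
  show ?case by (rule main[OF refl Suc.prems(2-5)])
qed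



lemma lemA:
  fixes z :: "'a::linorder set \<Rightarrow> 'f::field"
  assumes X: "finite X" "card X = 2 * Suc m + 2"
    and ch: "chn G X (Suc (Suc m)) z" and cy: "cyc X (Suc m) z" and nb: "\<not> bnd G X X (Suc (Suc m)) z"
    and v: "v \<in> X" and a: "a \<in> X" "a \<noteq> v" "\<not> (G a v \<and> G v a)"
    and b: "b \<in> X" "b \<noteq> v" "\<not> (G b v \<and> G v b)"
  shows "a = b"
proof (rule ccontr)
  assume ab: "a \<noteq> b"
  have "bnd G X X (Suc (Suc m)) z"
  proof (rule noncone_step[OF X(1) subset_refl v ch cy])
    fix w :: "'a set \<Rightarrow> 'f"
    assume w: "chn G {u \<in> X. u \<noteq> v \<and> G u v \<and> G v u} (Suc m) w" "cyc X m w"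
    let ?N = "{u \<in> X. u \<noteq> v \<and> G u v \<and> G v u}"
    have sub: "?N \<subseteq> X - {v, a, b}" using a b by auto
    have "card ?N \<le> card (X - {v, a, b})" using sub X(1) by (intro card_mono) auto
    also have "card (X - {v, a, b}) = card X - 3" using v a b ab X(1) by (simp add: card_Diff_subset)
    finally have "card ?N \<le> 2 * m + 1" using X(2) by simp
    moreover have "?N \<subseteq> X" by auto
    ultimately show "bnd G X ?N (Suc m) w" using core[OF X(1)] w by blast
  next
    fix z' :: "'a set \<Rightarrow> 'f"
    assume z': "chn G (X - {v}) (Suc (Suc m)) z'" "cyc X (Suc m) z'"
    have "card (X - {v}) \<le> 2 * Suc m + 1" using X v by simp
    moreover have "X - {v} \<subseteq> X" by auto
    ultimately show "bnd G X (X - {v}) (Suc (Suc m)) z'" using core[OF X(1)] z' by blast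
  qed
  with nb show False by simp
qed

lemma lemB:
  fixes z :: "'a::linorder set \<Rightarrow> 'f::field"
  assumes X: "finite X" and ch: "chn G X (Suc n) z" and cy: "cyc X n z" and nb: "\<not> bnd G X X (Suc n) z"
    and v: "v \<in> X"
  shows "\<exists>u\<in>X. u \<noteq> v \<and> \<not> (G u v \<and> G v u)"
proof (rule ccontr)
  assume "\<not> ?thesis"
  then have "\<forall>u\<in>X. u \<noteq> v \<longrightarrow> G u v \<and> G v u" by blast
  from cone_case[OF X subset_refl v this ch cy] nb show False by simp
qed

lemma bdry_Dop:
  fixes c :: "'a::linorder set \<Rightarrow> 'f::field"
  assumes X: "finite X" and K: "K \<subseteq> Pow X" and ch: "is_chain K n c" and \<tau>: "\<tau> \<subseteq> X" "card \<tau> + 1 = n"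
  shows "bdry K n c \<tau> = Dop X c \<tau>"
proof -
  have fin\<tau>: "finite \<tau>" using \<tau>(1) X by (rule finite_subset)
  have finK: "finite (simplices K n)"
  proof -
    have "simplices K n \<subseteq> Pow X" using K unfolding simplices_def by auto
    then show ?thesis using X by (meson finite_Pow_iff finite_subset)
  qed
  define A where "A = {\<sigma>\<in>simplices K n. \<tau> \<subseteq> \<sigma>}"
  define B where "B = {x\<in>X - \<tau>. insert x \<tau> \<in> simplices K n}"
  have s1: "bdry K n c \<tau> = (\<Sum>\<sigma>\<in>A. c \<sigma> * incidence \<sigma> \<tau>)"
    unfolding bdry_def
    by (rule sum.mono_neutral_right[OF finK]) (auto simp: A_def incidence_def)
  have s2: "Dop X c \<tau> = (\<Sum>x\<in>B. c (insert x \<tau>) * sg x \<tau>)"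
    unfolding Dop_def
    by (rule sum.mono_neutral_right) (use X ch in \<open>auto simp: B_def is_chain_def\<close>)
  have s3: "(\<Sum>\<sigma>\<in>A. c \<sigma> * incidence \<sigma> \<tau>) = (\<Sum>x\<in>B. c (insert x \<tau>) * sg x \<tau>)"
  proof (rule sum.reindex_cong[where l = "\<lambda>x. insert x \<tau>"])
    show "inj_on (\<lambda>x. insert x \<tau>) B"
      unfolding inj_on_def B_def by auto
    show "A = (\<lambda>x. insert x \<tau>) ` B"
    proof
      show "(\<lambda>x. insert x \<tau>) ` B \<subseteq> A" unfolding A_def B_def by auto
      show "A \<subseteq> (\<lambda>x. insert x \<tau>) ` B"
      proof
        fix \<sigma> assume \<sigma>: "\<sigma> \<in> A"
        then have \<sigma>K: "\<sigma> \<in> simplices K n" and sub: "\<tau> \<subseteq> \<sigma>" by (auto simp: A_def)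
        have \<sigma>X: "\<sigma> \<subseteq> X" using \<sigma>K K unfolding simplices_def by auto
        have fin\<sigma>: "finite \<sigma>" using \<sigma>X X by (rule finite_subset)
        have "card \<sigma> = n" using \<sigma>K unfolding simplices_def by auto
        then have "card (\<sigma> - \<tau>) = 1" using sub fin\<sigma> \<tau>(2) by (simp add: card_Diff_subset fin\<tau>)
        then obtain x where x: "\<sigma> - \<tau> = {x}" by (metis card_1_singletonE)
        have e: "\<sigma> = insert x \<tau>" using x sub by auto
        have "x \<in> B" using x e \<sigma>K \<sigma>X unfolding B_def by auto
        then show "\<sigma> \<in> (\<lambda>x. insert x \<tau>) ` B" using e by blast
      qed
    qed
    fix x assume x: "x \<in> B"
    then have xn: "x \<notin> \<tau>" by (auto simp: B_def)
    have e1: "insert x \<tau> - \<tau> = {x}" using xn by auto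
    have e2: "{y \<in> insert x \<tau>. y < x} = {y \<in> \<tau>. y < x}" by auto
    have "incidence (insert x \<tau>) \<tau> = (sg x \<tau> :: 'f)"
      unfolding incidence_def sg_def e1 the_elem_eq e2 using fin\<tau> xn by auto
    then show "c (insert x \<tau>) * incidence (insert x \<tau>) \<tau> = c (insert x \<tau>) * sg x \<tau>" by simp
  qed
  show ?thesis using s1 s2 s3 by simp
qed



lemma dI_diag:
  assumes "DMS X dX" "x \<in> X" "a \<le> b"
  shows "dI dX a b x x = 0"
proof -
  have "\<And>t. dX t x x = 0" using assms unfolding DMS_def pseudometric_on_def by auto
  then show ?thesis unfolding dI_def using assms(3) by simp
qed

lemma dI_sym:
  assumes "DMS X dX" "x \<in> X" "y \<in> X"
  shows "dI dX a b x y = dI dX a b y x"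
proof -
  have "\<And>t. dX t x y = dX t y x" using assms unfolding DMS_def pseudometric_on_def by auto
  then show ?thesis unfolding dI_def by simp
qed

lemma dI_mono:
  assumes "DMS X dX" "x \<in> X" "y \<in> X" "a \<le> b" "{a..b} \<subseteq> {a'..b'}"
  shows "dI dX a' b' x y \<le> dI dX a b x y"
  unfolding dI_def
proof (rule cINF_superset_mono)
  show "{a..b} \<noteq> {}" using assms(4) by simp
  have "\<And>t. dX t x y \<ge> 0" using assms unfolding DMS_def pseudometric_on_def by auto
  then show "bdd_below ((\<lambda>t. dX t x y) ` {a'..b'})" by (intro bdd_belowI[of _ 0]) auto
  show "{a..b} \<subseteq> {a'..b'}" by fact
qed auto

lemma rips_eq:
  assumes "DMS X dX" "a \<le> b" "0 \<le> \<delta>"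
  shows "rips X (dI dX a b) \<delta> = {\<sigma>. \<sigma> \<noteq> {} \<and> clq (\<lambda>x y. dI dX a b x y \<le> \<delta>) X \<sigma>}"
proof -
  have fin: "finite X" using assms(1) unfolding DMS_def by simp
  show ?thesis
    unfolding rips_def clq_def
    using dI_diag[OF assms(1) _ assms(2)] assms(3) fin
    by (auto intro: finite_subset) (metis subsetD order_refl)
qed

lemma simp_eq:
  assumes "finite X" "K = {\<sigma>. \<sigma> \<noteq> {} \<and> clq G X \<sigma>}" "n \<noteq> 0"
  shows "simplices K n = {\<sigma>. clq G X \<sigma> \<and> card \<sigma> = n}"
  using assms unfolding simplices_def by auto

lemma chain_eq:
  assumes "finite X" "K = {\<sigma>. \<sigma> \<noteq> {} \<and> clq G X \<sigma>}" "n \<noteq> 0"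
  shows "is_chain K n c \<longleftrightarrow> chn G X n c"
  unfolding is_chain_def chn_def simp_eq[OF assms] by blast

lemma clq_sub: "clq G X \<sigma> \<Longrightarrow> \<tau> \<subseteq> \<sigma> \<Longrightarrow> clq G X \<tau>"
  unfolding clq_def by (meson subset_trans subsetD)

lemma hom_translate:
  assumes X: "finite X" and K: "K = {\<sigma>. \<sigma> \<noteq> {} \<and> clq G X \<sigma>}"
    and h: "homology_nonzero TYPE('f::field) K (Suc m)"
  shows "\<exists>z::'a::linorder set \<Rightarrow> 'f. chn G X (Suc (Suc m)) z \<and> cyc X (Suc m) z \<and> \<not> bnd G X X (Suc (Suc m)) z"
proof -
  obtain c :: "'a set \<Rightarrow> 'f" where c1: "is_chain K (Suc m + 1) c"
    and c2: "\<forall>\<tau>\<in>simplices K (Suc m). bdry K (Suc m + 1) c \<tau> = 0"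
    and c3: "\<not> (\<exists>b :: 'a set \<Rightarrow> 'f. is_chain K (Suc m + 2) b
              \<and> (\<forall>\<tau>\<in>simplices K (Suc m + 1). c \<tau> = bdry K (Suc m + 2) b \<tau>))"
    using h unfolding homology_nonzero_def by blast
  have KX: "K \<subseteq> Pow X" using K unfolding clq_def by auto
  have chc: "chn G X (Suc (Suc m)) c" using c1 chain_eq[OF X K, where n="Suc m + 1" and c=c] by simp
  have cyc: "cyc X (Suc m) c" unfolding cyc_def
  proof (intro allI impI)
    fix \<tau> assume \<tau>: "\<tau> \<subseteq> X" "card \<tau> = Suc m"
    show "Dop X c \<tau> = 0"
    proof (cases "clq G X \<tau>")
      case True
      then have "\<tau> \<in> simplices K (Suc m)" using simp_eq[OF X K] \<tau> by simp
      then have "bdry K (Suc m + 1) c \<tau> = 0" using c2 by blast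
      moreover have "bdry K (Suc m + 1) c \<tau> = Dop X c \<tau>" by (rule bdry_Dop[OF X KX c1 \<tau>(1)]) (use \<tau> in simp)
      ultimately show ?thesis by simp
    next
      case False
      show ?thesis unfolding Dop_def
      proof (rule sum.neutral, rule ballI)
        fix x assume "x \<in> X - \<tau>"
        have "\<not> clq G X (insert x \<tau>)" using False clq_sub by blast
        then have "c (insert x \<tau>) = 0" using chc unfolding chn_def by blast
        then show "c (insert x \<tau>) * sg x \<tau> = 0" by simp
      qed
    qed
  qed
  have nb: "\<not> bnd G X X (Suc (Suc m)) c"
  proof
    assume "bnd G X X (Suc (Suc m)) c"
    then obtain b :: "'a set \<Rightarrow> 'f" where b1: "chn G X (Suc (Suc m) + 1) b"
      and b2: "\<forall>\<sigma>. \<sigma> \<subseteq> X \<longrightarrow> card \<sigma> = Suc (Suc m) \<longrightarrow> c \<sigma> = Dop X b \<sigma>"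
      unfolding bnd_def by blast
    have ib: "is_chain K (Suc m + 2) b" using b1 chain_eq[OF X K, where n="Suc m + 2" and c=b] by simp
    have "\<forall>\<tau>\<in>simplices K (Suc m + 1). c \<tau> = bdry K (Suc m + 2) b \<tau>"
    proof
      fix \<tau> assume "\<tau> \<in> simplices K (Suc m + 1)"
      then have \<tau>: "\<tau> \<subseteq> X" "card \<tau> = Suc (Suc m)" using simp_eq[OF X K, of "Suc m + 1"] unfolding clq_def by auto
      have "bdry K (Suc m + 2) b \<tau> = Dop X b \<tau>" by (rule bdry_Dop[OF X KX ib \<tau>(1)]) (use \<tau> in simp)
      then show "c \<tau> = bdry K (Suc m + 2) b \<tau>" using b2 \<tau> by simp
    qed
    with ib c3 show False by blast
  qed
  show ?thesis using chc cyc nb by blast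
qed

lemma h0:
  assumes X: "finite X" "card X = 2" and K: "K = {\<sigma>. \<sigma> \<noteq> {} \<and> clq G X (\<sigma>::'a::linorder set)}"
  shows "homology_nonzero TYPE('f::field) K 0"
proof -
  obtain u v where uv: "X = {u, v}" "u < v"
  proof -
    obtain x y where "X = {x, y}" "x \<noteq> y" using X(2) by (metis card_2_iff)
    then show ?thesis using that by (metis insert_commute linorder_neqE)
  qed
  have KX: "K \<subseteq> Pow X" using K unfolding clq_def by auto
  define c :: "'a set \<Rightarrow> 'f" where "c = (\<lambda>\<sigma>. if \<sigma> = {u} then 1 else 0)"
  have S1: "simplices K 1 = {\<sigma>. clq G X \<sigma> \<and> card \<sigma> = 1}" using simp_eq[OF X(1) K] by simp
  have su: "{u} \<in> simplices K 1" "{v} \<in> simplices K 1" unfolding S1 clq_def using uv by auto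
  have S0: "simplices K 0 = {}" using K X(1) unfolding simplices_def clq_def
    by (auto dest: finite_subset)
  show ?thesis unfolding homology_nonzero_def
  proof (intro exI conjI)
    show "is_chain K (0 + 1) c" unfolding is_chain_def c_def using su by auto
    show "\<forall>\<tau>\<in>simplices K 0. bdry K (0 + 1) c \<tau> = 0" using S0 by simp
    show "\<not> (\<exists>b :: 'a set \<Rightarrow> 'f. is_chain K (0 + 2) b \<and> (\<forall>\<tau>\<in>simplices K (0 + 1). c \<tau> = bdry K (0 + 2) b \<tau>))"
    proof
      assume "\<exists>b :: 'a set \<Rightarrow> 'f. is_chain K (0 + 2) b \<and> (\<forall>\<tau>\<in>simplices K (0 + 1). c \<tau> = bdry K (0 + 2) b \<tau>)"
      then obtain b :: "'a set \<Rightarrow> 'f" where b1': "is_chain K (0 + 2) b" and b2': "\<forall>\<tau>\<in>simplices K (0 + 1). c \<tau> = bdry K (0 + 2) b \<tau>"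
        by blast
      have b1: "is_chain K 2 b" using b1' by (simp add: numeral_2_eq_2)
      have b2: "\<forall>\<tau>\<in>simplices K 1. c \<tau> = bdry K 2 b \<tau>" using b2' by (simp add: numeral_2_eq_2)
      have ne: "u \<noteq> v" using uv by simp
      have "bdry K 2 b {u} = Dop X b {u}" by (rule bdry_Dop[OF X(1) KX b1]) (use uv in auto)
      also have "\<dots> = b {u, v} * sg v {u}" unfolding Dop_def using uv ne by (simp add: insert_commute)
      also have "\<dots> = - b {u, v}"
      proof -
        have e: "{y \<in> {u}. y < v} = {u}" using uv by auto
        show ?thesis unfolding sg_def e by simp
      qed
      finally have e1: "bdry K 2 b {u} = - b {u, v}" .
      have "bdry K 2 b {v} = Dop X b {v}" by (rule bdry_Dop[OF X(1) KX b1]) (use uv in auto)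
      also have "\<dots> = b {u, v} * sg u {v}"
      proof -
        have "X - {v} = {u}" using uv ne by auto
        then show ?thesis unfolding Dop_def by simp
      qed
      also have "\<dots> = b {u, v}"
      proof -
        have e: "{y \<in> {v}. y < u} = {}" using uv by auto
        show ?thesis unfolding sg_def e by simp
      qed
      finally have e2: "bdry K 2 b {v} = b {u, v}" .
      have "c {u} = bdry K 2 b {u}" "c {v} = bdry K 2 b {v}" using b2 su by auto
      then show False using e1 e2 ne unfolding c_def by simp
    qed
  qed
qed



theorem mainTheorem2:
  fixes X :: "'a::linorder set" and dX :: "real \<Rightarrow> 'a \<Rightarrow> 'a \<Rightarrow> real" and k :: nat
  assumes "DMS X dX" and "card X = 2*k+2"
    and "p \<in> Dyn" and "q \<in> Dyn" and "r \<in> Dyn"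
    and "dyn_le p q" and "dyn_le q r"
    and "p \<in> supp_Hk_lev TYPE('f::field) X dX k"
    and "r \<in> supp_Hk_lev TYPE('f::field) X dX k"
  shows "q \<in> supp_Hk_lev TYPE('f::field) X dX k"
proof -
  have fin: "finite X" using assms(1) unfolding DMS_def by simp
  obtain a1 b1 d1 where p: "p = ((a1, b1), d1)" by (metis surj_pair)
  obtain a2 b2 d2 where q: "q = ((a2, b2), d2)" by (metis surj_pair)
  obtain a3 b3 d3 where r: "r = ((a3, b3), d3)" by (metis surj_pair)
  have D1: "a1 \<le> b1" "0 \<le> d1" using assms(3) p unfolding Dyn_def by auto
  have D2: "a2 \<le> b2" "0 \<le> d2" using assms(4) q unfolding Dyn_def by auto
  have D3: "a3 \<le> b3" "0 \<le> d3" using assms(5) r unfolding Dyn_def by auto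
  have L12: "{a1..b1} \<subseteq> {a2..b2}" "d1 \<le> d2" using assms(6) p q unfolding dyn_le_def by auto
  have L23: "{a2..b2} \<subseteq> {a3..b3}" "d2 \<le> d3" using assms(7) q r unfolding dyn_le_def by auto
  define G1 where "G1 = (\<lambda>x y. dI dX a1 b1 x y \<le> d1)"
  define G2 where "G2 = (\<lambda>x y. dI dX a2 b2 x y \<le> d2)"
  define G3 where "G3 = (\<lambda>x y. dI dX a3 b3 x y \<le> d3)"
  have K1: "rips_lev X dX p = {\<sigma>. \<sigma> \<noteq> {} \<and> clq G1 X \<sigma>}"
    unfolding rips_lev_def p G1_def using rips_eq[OF assms(1) D1] by simp
  have K2: "rips_lev X dX q = {\<sigma>. \<sigma> \<noteq> {} \<and> clq G2 X \<sigma>}"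
    unfolding rips_lev_def q G2_def using rips_eq[OF assms(1) D2] by simp
  have K3: "rips_lev X dX r = {\<sigma>. \<sigma> \<noteq> {} \<and> clq G3 X \<sigma>}"
    unfolding rips_lev_def r G3_def using rips_eq[OF assms(1) D3] by simp
  have hp: "homology_nonzero TYPE('f) {\<sigma>. \<sigma> \<noteq> {} \<and> clq G1 X \<sigma>} k"
    using assms(8) K1 unfolding supp_Hk_lev_def by simp
  have hr: "homology_nonzero TYPE('f) {\<sigma>. \<sigma> \<noteq> {} \<and> clq G3 X \<sigma>} k"
    using assms(9) K3 unfolding supp_Hk_lev_def by simp
  have goal: "homology_nonzero TYPE('f) {\<sigma>. \<sigma> \<noteq> {} \<and> clq G2 X \<sigma>} k"
  proof (cases k)
    case 0
    then show ?thesis using h0[OF fin _ refl] assms(2) by simp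
  next
    case (Suc m)
    obtain z1 :: "'a set \<Rightarrow> 'f" where z1: "chn G1 X (Suc (Suc m)) z1" "cyc X (Suc m) z1" "\<not> bnd G1 X X (Suc (Suc m)) z1"
      using hom_translate[OF fin refl, where 'f='f] hp Suc by blast
    obtain z3 :: "'a set \<Rightarrow> 'f" where z3: "chn G3 X (Suc (Suc m)) z3" "cyc X (Suc m) z3" "\<not> bnd G3 X X (Suc (Suc m)) z3"
      using hom_translate[OF fin refl, where 'f='f] hr Suc by blast
    have cX: "card X = 2 * Suc m + 2" using assms(2) Suc by simp
    have A: "\<And>v a b. v \<in> X \<Longrightarrow> a \<in> X \<Longrightarrow> a \<noteq> v \<Longrightarrow> \<not> (G1 a v \<and> G1 v a) \<Longrightarrow> b \<in> X \<Longrightarrow> b \<noteq> v \<Longrightarrow> \<not> (G1 b v \<and> G1 v b) \<Longrightarrow> a = b"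
      using lemA[OF fin cX z1] by blast
    have B: "\<And>v. v \<in> X \<Longrightarrow> \<exists>u\<in>X. u \<noteq> v \<and> \<not> (G3 u v \<and> G3 v u)"
      using lemB[OF fin z3] by blast
    have m12: "\<And>x y. x \<in> X \<Longrightarrow> y \<in> X \<Longrightarrow> G1 x y \<Longrightarrow> G2 x y"
    proof -
      fix x y assume xy: "x \<in> X" "y \<in> X" "G1 x y"
      have "dI dX a2 b2 x y \<le> dI dX a1 b1 x y" by (rule dI_mono[OF assms(1) xy(1,2) D1(1) L12(1)])
      then show "G2 x y" using xy(3) L12(2) unfolding G1_def G2_def by linarith
    qed
    have m23: "\<And>x y. x \<in> X \<Longrightarrow> y \<in> X \<Longrightarrow> G2 x y \<Longrightarrow> G3 x y"
    proof -
      fix x y assume xy: "x \<in> X" "y \<in> X" "G2 x y"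
      have "dI dX a3 b3 x y \<le> dI dX a2 b2 x y" by (rule dI_mono[OF assms(1) xy(1,2) D2(1) L23(1)])
      then show "G3 x y" using xy(3) L23(2) unfolding G3_def G2_def by linarith
    qed
    have s1: "\<And>x y. x \<in> X \<Longrightarrow> y \<in> X \<Longrightarrow> G1 x y = G1 y x"
      unfolding G1_def using dI_sym[OF assms(1)] by metis
    have s2: "\<And>x y. x \<in> X \<Longrightarrow> y \<in> X \<Longrightarrow> G2 x y = G2 y x"
      unfolding G2_def using dI_sym[OF assms(1)] by metis
    have key: "\<And>x y. x \<in> X \<Longrightarrow> y \<in> X \<Longrightarrow> x \<noteq> y \<Longrightarrow> G2 x y \<Longrightarrow> G1 x y"
    proof (rule ccontr)
      fix x y assume xy: "x \<in> X" "y \<in> X" "x \<noteq> y" "G2 x y" "\<not> G1 x y"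
      obtain u where u: "u \<in> X" "u \<noteq> x" "\<not> (G3 u x \<and> G3 x u)" using B[OF xy(1)] by blast
      have u1: "\<not> (G1 u x \<and> G1 x u)" using u m12 m23 xy(1) by blast
      have y1: "\<not> (G1 y x \<and> G1 x y)" using xy(5) by blast
      have "y = u" using A[OF xy(1) xy(2) _ y1 u(1) u(2) u1] xy(3) by blast
      moreover have "G3 y x \<and> G3 x y" using xy s2 m23 by blast
      ultimately show False using u(3) by blast
    qed
    have "\<And>\<sigma>. clq G2 X \<sigma> = clq G1 X \<sigma>"
      unfolding clq_def using key m12 by blast
    then have "{\<sigma>. \<sigma> \<noteq> {} \<and> clq G2 X \<sigma>} = {\<sigma>. \<sigma> \<noteq> {} \<and> clq G1 X \<sigma>}" by simp
    then show ?thesis using hp by simp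
  qed
  show ?thesis unfolding supp_Hk_lev_def using assms(4) goal K2 by simp
qed

end
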